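(* Let $\alpha>0$, $d>0$ and $\beta\ge 1$. For every $(\theta_0,W_0)\in\Omega_\beta$ the system $$\dot\theta=F_1(\theta,W),\qquad \dot W=F_2(\theta,W),\qquad (\theta(0),W(0))=(\theta_0,W_0)$$ has a unique solution $(\theta,W)\in C^1(\mathbb{R})\times C^1(\mathbb{R})$ defined for all $t\in\mathbb{R}$ and taking values in $\Omega_\beta$.
   Context: Fix parameters $\alpha>0$, $d>0$, $\beta\ge1$. Let $\theta_\beta=\arctan(\beta^{-1/2})\in(0,\pi/2)$, the unique $\theta\in(0,\pi/2)$ with $\beta^{1/2}\sin\theta-\cos\theta=0$. Let $\Omega_\beta=\{(\theta,W)\in\mathbb{R}^2:\ 0<\theta<\pi/2,\ W\in\mathbb{R},\ (\theta,W)\neq(\theta_\beta,0)\}$. Put $D_\beta(\theta,W)=\frac{d^2}{\beta}(\beta^{1/2}\sin\theta-\cos\theta)^2+W^2$ (positive on $\Omega_\beta$) and $$F_1(\theta,W)=\frac{\alpha\beta^{1/2}W}{D_\beta(\theta,W)^{3/2}},\qquad F_2(\theta,W)=\frac{\beta^{3/2}\sin\theta-\cos\theta}{d\sin\theta\cos\theta}-\frac{\alpha d^2(\sin\theta+\beta^{1/2}\cos\theta)(\beta^{1/2}\sin\theta-\cos\theta)}{\beta^{1/2}D_\beta(\theta,W)^{3/2}}.$$ (This system describes two coaxial circular vortex filaments of radii $R_1=d\beta^{-1/2}\cos\theta$, $R_2=d\sin\theta$ and axial separation $W$.) *)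

theory Defs
  imports "HOL-Analysis.Analysis"
begin

definition theta_beta :: "real \<Rightarrow> real" where
  "theta_beta \<beta> = arctan (1 / sqrt \<beta>)"

definition Omega_beta :: "real \<Rightarrow> (real \<times> real) set" where
  "Omega_beta \<beta> = {(\<theta>, W). 0 < \<theta> \<and> \<theta> < pi / 2 \<and> (\<theta>, W) \<noteq> (theta_beta \<beta>, 0)}"

definition D_beta :: "real \<Rightarrow> real \<Rightarrow> real \<Rightarrow> real \<Rightarrow> real" where
  "D_beta d \<beta> \<theta> W = d^2 / \<beta> * (sqrt \<beta> * sin \<theta> - cos \<theta>)^2 + W^2"

definition F1 :: "real \<Rightarrow> real \<Rightarrow> real \<Rightarrow> real \<Rightarrow> real \<Rightarrow> real" where
  "F1 \<alpha> d \<beta> \<theta> W = \<alpha> * sqrt \<beta> * W / (D_beta d \<beta> \<theta> W) powr (3/2)"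

definition F2 :: "real \<Rightarrow> real \<Rightarrow> real \<Rightarrow> real \<Rightarrow> real \<Rightarrow> real" where
  "F2 \<alpha> d \<beta> \<theta> W =
     (\<beta> powr (3/2) * sin \<theta> - cos \<theta>) / (d * sin \<theta> * cos \<theta>)
     - \<alpha> * d^2 * (sin \<theta> + sqrt \<beta> * cos \<theta>) * (sqrt \<beta> * sin \<theta> - cos \<theta>)
       / (sqrt \<beta> * (D_beta d \<beta> \<theta> W) powr (3/2))"

definition C1_functions :: "(real \<Rightarrow> real) set" where
  "C1_functions = {f. (\<forall>t. f differentiable (at t)) \<and> continuous_on UNIV (deriv f)}"

end

theory Submission
  imports Defs "HOL-Analysis.Analysis"
begin


lemma norm_diff_deriv_bound:
  fixes F :: "real \<Rightarrow> 'a::banach"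
  assumes "a \<le> b"
    and dF: "\<And>s. s \<in> {a..b} \<Longrightarrow> (F has_vector_derivative F' s) (at s within {a..b})"
    and dG: "\<And>s. s \<in> {a..b} \<Longrightarrow> (G has_real_derivative G' s) (at s within {a..b})"
    and le: "\<And>s. s \<in> {a..b} \<Longrightarrow> norm (F' s) \<le> G' s"
  shows "norm (F b - F a) \<le> G b - G a"
proof -
  have 1: "(F' has_integral (F b - F a)) {a..b}"
    by (rule fundamental_theorem_of_calculus) (use assms in auto)
  have 2: "(G' has_integral (G b - G a)) {a..b}"
    by (rule fundamental_theorem_of_calculus)
       (use assms in \<open>auto simp: has_real_derivative_iff_has_vector_derivative\<close>)
  have "norm (integral {a..b} F') \<le> integral {a..b} G'"
    by (rule integral_norm_bound_integral[OF has_integral_integrable[OF 1] has_integral_integrable[OF 2] le])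
  then show ?thesis using 1 2 by (simp add: integral_unique)
qed

lemma norm_bound_from_zero:
  fixes F :: "real \<Rightarrow> 'a::banach"
  assumes dF: "\<And>s. (F has_vector_derivative F' s) (at s)" and F0: "F 0 = 0"
    and dK: "\<And>u. (K has_real_derivative k u) (at u)" and K0: "K 0 = 0"
    and le: "\<And>s. norm (F' s) \<le> k \<bar>s\<bar>"
  shows "norm (F t) \<le> K \<bar>t\<bar>"
proof (cases "0 \<le> t")
  case True
  have le': "norm (F' s) \<le> k s" if "0 \<le> s" for s using le[of s] that by simp
  have "norm (F t - F 0) \<le> K t - K 0"
    by (rule norm_diff_deriv_bound[OF True, where F'=F' and G'=k])
       (use dF dK le' in \<open>auto intro: has_vector_derivative_at_within DERIV_subset
          simp: abs_of_nonneg\<close>)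
  then show ?thesis using True F0 K0 by simp
next
  case False
  have dG: "((\<lambda>s. - K (- s)) has_real_derivative k (- s)) (at s)" for s
  proof -
    have "((\<lambda>s. K (- s)) has_real_derivative k (- s) * (- 1)) (at s)"
      by (rule DERIV_chain2[OF dK]) (auto intro!: derivative_eq_intros)
    then show ?thesis using DERIV_minus by fastforce
  qed
  have le': "norm (F' s) \<le> k (- s)" if "s \<le> 0" for s using le[of s] that by simp
  have "norm (F 0 - F t) \<le> (- K (- 0)) - (- K (- t))"
    by (rule norm_diff_deriv_bound[where F'=F' and G'="\<lambda>s. k (- s)"])
       (use False dF dG le' in \<open>auto intro: has_vector_derivative_at_within DERIV_subset
          simp: abs_if\<close>)
  then show ?thesis using False F0 K0 by (simp add: norm_minus_commute)
qed

definition Jint :: "(real \<Rightarrow> 'a::banach) \<Rightarrow> real \<Rightarrow> 'a" where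
  "Jint h t = (if 0 \<le> t then integral {0..t} h else - integral {t..0} h)"

lemma Jint_0[simp]: "Jint h 0 = 0"
  by (simp add: Jint_def)

lemma Jint_deriv:
  fixes h :: "real \<Rightarrow> 'a::banach"
  assumes h: "continuous_on UNIV h"
  shows "(Jint h has_vector_derivative h t) (at t)"
proof -
  define M where "M = \<bar>t\<bar> + 1"
  define I where "I s = integral {-M..s} h" for s
  have "(I has_vector_derivative h t) (at t within {-M..M})"
    unfolding I_def
    by (rule integral_has_vector_derivative) (use h M_def in \<open>auto intro: continuous_on_subset\<close>)
  moreover have "at t within {-M..M} = at t"
    by (rule at_within_interior) (auto simp: M_def)
  ultimately have dI: "(I has_vector_derivative h t) (at t)" by simp
  have dI2: "((\<lambda>s. I s - I 0) has_vector_derivative h t) (at t)"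
    using has_vector_derivative_diff[OF dI has_vector_derivative_const[of "I 0"]] by simp
  show ?thesis
  proof (rule has_vector_derivative_transform_within_open[OF dI2, of "ball t 1"])
    fix s assume s: "s \<in> ball t 1"
    then have sM: "-M \<le> s" using M_def by (auto simp: dist_real_def)
    have int: "\<And>u v. h integrable_on {u..v}"
      by (rule integrable_continuous_interval) (use h in \<open>auto intro: continuous_on_subset\<close>)
    show "I s - I 0 = Jint h s"
    proof (cases "0 \<le> s")
      case True
      have "integral {-M..0} h + integral {0..s} h = integral {-M..s} h"
        by (rule Henstock_Kurzweil_Integration.integral_combine[where a="-M" and c=0 and b=s]) (use True int M_def in auto)
      then show ?thesis using True by (auto simp: Jint_def I_def algebra_simps)
    next
      case False
      have "integral {-M..s} h + integral {s..0} h = integral {-M..0} h"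
        by (rule Henstock_Kurzweil_Integration.integral_combine[where a="-M" and c=s and b=0]) (use False int sM in auto)
      then show ?thesis using False by (auto simp: Jint_def I_def algebra_simps)
    qed
  qed auto
qed

theorem global_ode_lipschitz:
  fixes f :: "'a::euclidean_space \<Rightarrow> 'a"
  assumes lip: "L-lipschitz_on UNIV f" and bnd: "\<And>x. norm (f x) \<le> C"
  shows "\<exists>x. x 0 = x0 \<and> (\<forall>t. (x has_vector_derivative f (x t)) (at t))"
proof -
  define l where "l = L + 1"
  have L0: "0 \<le> L" using lip lipschitz_on_nonneg by blast
  then have l0: "0 < l" by (simp add: l_def)
  have lipl: "norm (f a - f b) \<le> l * norm (a - b)" for a b
  proof -
    have "norm (f a - f b) \<le> L * norm (a - b)" using lipschitz_on_normD[OF lip] by auto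
    also have "\<dots> \<le> l * norm (a - b)" by (simp add: l_def mult_right_mono)
    finally show ?thesis .
  qed
  have C0: "0 \<le> C" using bnd[of 0] norm_ge_zero order_trans by blast
  have fcont: "continuous_on UNIV f" using lip by (rule lipschitz_on_continuous_on)
  define w where "w t = exp (- (2 * l * \<bar>t\<bar>))" for t :: real
  define wi where "wi t = exp (2 * l * \<bar>t\<bar>)" for t :: real
  have wwi: "w t * wi t = 1" for t by (simp add: w_def wi_def exp_minus field_simps)
  have wpos: "0 < w t" "0 < wi t" for t by (auto simp: w_def wi_def)
  have wt: "w t * \<bar>t\<bar> \<le> 1 / (2 * l)" for t
  proof -
    have "1 + 2 * l * \<bar>t\<bar> \<le> wi t" unfolding wi_def by (rule exp_ge_add_one_self)
    then have "2 * l * \<bar>t\<bar> * w t \<le> wi t * w t" using wpos[of t]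
      by (intro mult_right_mono) auto
    then have "2 * l * (w t * \<bar>t\<bar>) \<le> 1" using wwi[of t] by (simp add: algebra_simps)
    then show ?thesis using l0 by (simp add: field_simps)
  qed
  define X where "X y t = wi t *\<^sub>R apply_bcontfun y t" for y :: "real \<Rightarrow>\<^sub>C 'a" and t
  define hh where "hh y s = f (X y s)" for y s
  define Q0 where "Q0 y t = w t *\<^sub>R (x0 + Jint (hh y) t)" for y t
  have contX: "continuous_on UNIV (X y)" for y
    unfolding X_def wi_def by (intro continuous_intros) auto
  have conthh: "continuous_on UNIV (hh y)" for y
    unfolding hh_def using continuous_on_compose2[OF fcont contX] by auto
  have dJ: "(Jint (hh y) has_vector_derivative hh y t) (at t)" for y t
    by (rule Jint_deriv[OF conthh])
  have Jbound: "norm (Jint (hh y) t) \<le> C * \<bar>t\<bar>" for y t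
  proof -
    have "norm (Jint (hh y) t) \<le> (\<lambda>u. C * u) \<bar>t\<bar>"
      by (rule norm_bound_from_zero[where F'="hh y" and k="\<lambda>_. C"])
         (auto intro!: derivative_eq_intros simp: dJ bnd hh_def[symmetric], simp add: hh_def bnd)
    then show ?thesis by simp
  qed
  have Q0b: "Q0 y \<in> bcontfun" for y
  proof (rule bcontfun_normI)
    have "continuous (at t) (Jint (hh y))" for t
      using has_vector_derivative_continuous[OF dJ] .
    then have "continuous_on UNIV (Jint (hh y))"
      by (simp add: continuous_at_imp_continuous_on)
    then show "continuous_on UNIV (Q0 y)"
      unfolding Q0_def w_def by (intro continuous_intros) auto
    fix t
    have "norm (Q0 y t) = w t * norm (x0 + Jint (hh y) t)"
      using wpos[of t] by (simp add: Q0_def)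
    also have "\<dots> \<le> w t * (norm x0 + C * \<bar>t\<bar>)"
      using wpos[of t] Jbound[of y t] norm_triangle_ineq[of x0 "Jint (hh y) t"]
      by (intro mult_left_mono) auto
    also have "\<dots> = w t * norm x0 + C * (w t * \<bar>t\<bar>)" by (simp add: algebra_simps)
    also have "\<dots> \<le> 1 * norm x0 + C * (1 / (2 * l))"
    proof (intro add_mono mult_right_mono mult_left_mono wt)
      show "w t \<le> 1" unfolding w_def using l0 by auto
    qed (use C0 in auto)
    finally show "norm (Q0 y t) \<le> norm x0 + C / (2 * l)" by simp
  qed
  define Q where "Q y = Bcontfun (Q0 y)" for y
  have Qapp: "apply_bcontfun (Q y) = Q0 y" for y
    unfolding Q_def using Q0b by (simp add: Bcontfun_inverse)
  have contr: "dist (Q y) (Q z) \<le> (1/2) * dist y z" for y z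
  proof (rule dist_bound)
    fix t
    define \<rho> where "\<rho> = dist y z"
    have rho0: "0 \<le> \<rho>" by (simp add: \<rho>_def)
    define F where "F s = Jint (hh y) s - Jint (hh z) s" for s
    have Fb: "norm (F t) \<le> (\<lambda>u. \<rho> * (exp (2 * l * u) - 1) / 2) \<bar>t\<bar>"
    proof (rule norm_bound_from_zero[where F'="\<lambda>s. hh y s - hh z s"
          and k="\<lambda>u. \<rho> * l * exp (2 * l * u)"])
      show "(F has_vector_derivative hh y s - hh z s) (at s)" for s
        unfolding F_def by (intro has_vector_derivative_diff dJ)
      show "F 0 = 0" by (simp add: F_def)
      show "((\<lambda>u. \<rho> * (exp (2 * l * u) - 1) / 2) has_real_derivative \<rho> * l * exp (2 * l * u)) (at u)" for u
        by (auto intro!: derivative_eq_intros)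
      show "(\<lambda>u. \<rho> * (exp (2 * l * u) - 1) / 2) 0 = 0" by simp
      fix s
      have "norm (hh y s - hh z s) \<le> l * norm (X y s - X z s)"
        unfolding hh_def by (rule lipl)
      also have "X y s - X z s = wi s *\<^sub>R (apply_bcontfun y s - apply_bcontfun z s)"
        by (simp add: X_def algebra_simps)
      also have "l * norm \<dots> = l * wi s * dist (apply_bcontfun y s) (apply_bcontfun z s)"
        using wpos[of s] by (simp add: dist_norm)
      also have "\<dots> \<le> l * wi s * \<rho>"
        unfolding \<rho>_def using l0 wpos[of s] by (intro mult_left_mono dist_bounded) auto
      finally show "norm (hh y s - hh z s) \<le> \<rho> * l * exp (2 * l * \<bar>s\<bar>)"
        by (simp add: wi_def algebra_simps)
    qed
    have "dist (apply_bcontfun (Q y) t) (apply_bcontfun (Q z) t) = w t * norm (F t)"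
      using wpos[of t] by (simp add: Qapp Q0_def F_def dist_norm algebra_simps flip: scaleR_diff_right)
    also have "\<dots> \<le> w t * (\<rho> * (wi t - 1) / 2)"
      using Fb wpos[of t] by (intro mult_left_mono) (auto simp: wi_def)
    also have "\<dots> = \<rho> * (1 - w t) / 2"
      using wwi[of t] by (simp add: algebra_simps)
    also have "\<dots> \<le> (1/2) * \<rho>" using wpos[of t] rho0 mult_left_mono[of "1 - w t" 1 \<rho>] by simp
    finally show "dist (apply_bcontfun (Q y) t) (apply_bcontfun (Q z) t) \<le> (1/2) * dist y z"
      by (simp add: \<rho>_def)
  qed
  obtain y where yfix: "Q y = y"
    using Banach_fix[OF complete_UNIV UNIV_not_empty, of "1/2" Q] contr by auto
  define x where "x t = X y t" for t
  have xeq: "x t = x0 + Jint (hh y) t" for t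
  proof -
    have "apply_bcontfun y t = Q0 y t" using yfix Qapp by metis
    then have "x t = wi t *\<^sub>R (w t *\<^sub>R (x0 + Jint (hh y) t))"
      by (simp add: x_def X_def Q0_def)
    also have "\<dots> = x0 + Jint (hh y) t" using wwi[of t] by (simp add: mult.commute)
    finally show ?thesis .
  qed
  have "x = (\<lambda>t. x0 + Jint (hh y) t)" using xeq by auto
  show ?thesis
  proof (intro exI conjI allI)
    show "x 0 = x0" using xeq[of 0] by simp
    fix t
    have "((\<lambda>t. x0 + Jint (hh y) t) has_vector_derivative hh y t) (at t)"
      using has_vector_derivative_add[OF has_vector_derivative_const dJ] by simp
    moreover have "hh y t = f (x t)" by (simp add: hh_def x_def)
    ultimately show "(x has_vector_derivative f (x t)) (at t)"
      using \<open>x = _\<close> by simp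
  qed
qed

lemma ode_unique:
  fixes x y :: "real \<Rightarrow> 'a::real_inner"
  assumes dx: "\<And>t. t \<in> {a..b} \<Longrightarrow> (x has_vector_derivative x' t) (at t)"
    and dy: "\<And>t. t \<in> {a..b} \<Longrightarrow> (y has_vector_derivative y' t) (at t)"
    and lip: "\<And>t. t \<in> {a..b} \<Longrightarrow> norm (x' t - y' t) \<le> L * norm (x t - y t)"
    and tz: "tz \<in> {a..b}" "x tz = y tz" and t: "t \<in> {a..b}"
  shows "x t = y t"
proof -
  define d where "d s = x s - y s" for s
  define v where "v s = x' s - y' s" for s
  have dn: "((\<lambda>s. d s \<bullet> d s) has_real_derivative 2 * (d s \<bullet> v s)) (at s)" if "s \<in> {a..b}" for s
  proof -
    have dd: "(d has_derivative (\<lambda>h. h *\<^sub>R v s)) (at s)"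
      using has_vector_derivative_diff[OF dx[OF that] dy[OF that]]
      unfolding has_vector_derivative_def d_def v_def .
    have "((\<lambda>s. d s \<bullet> d s) has_derivative (\<lambda>h. d s \<bullet> (h *\<^sub>R v s) + (h *\<^sub>R v s) \<bullet> d s)) (at s)"
      by (rule has_derivative_inner[OF dd dd])
    moreover have "(\<lambda>h. d s \<bullet> (h *\<^sub>R v s) + (h *\<^sub>R v s) \<bullet> d s) = (*) (2 * (d s \<bullet> v s))"
      by (auto simp: fun_eq_iff inner_commute algebra_simps)
    ultimately show ?thesis unfolding has_field_derivative_def by simp
  qed
  have key: "d s \<bullet> v s \<le> L * (d s \<bullet> d s)" if "s \<in> {a..b}" for s
  proof -
    have "d s \<bullet> v s \<le> norm (d s) * norm (v s)" by (rule norm_cauchy_schwarz)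
    also have "\<dots> \<le> norm (d s) * (L * norm (d s))"
      using lip[OF that] by (intro mult_left_mono) (auto simp: d_def v_def)
    also have "\<dots> = L * (d s \<bullet> d s)" by (simp add: power2_norm_eq_inner[symmetric] power2_eq_square)
    finally show ?thesis .
  qed
  have d0: "d tz \<bullet> d tz = 0" using tz by (simp add: d_def)
  have "d t \<bullet> d t \<le> 0"
  proof (cases "tz \<le> t")
    case True
    define \<phi> where "\<phi> s = exp (- (2 * L * s)) * (d s \<bullet> d s)" for s
    have "\<phi> t \<le> \<phi> tz"
    proof (rule DERIV_nonpos_imp_nonincreasing[OF True])
      fix s assume s: "tz \<le> s" "s \<le> t"
      then have sab: "s \<in> {a..b}" using tz t by auto
      have "(\<phi> has_real_derivative exp (- (2 * L * s)) * (- (2 * L)) * (d s \<bullet> d s)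
          + exp (- (2 * L * s)) * (2 * (d s \<bullet> v s))) (at s)"
        unfolding \<phi>_def by (auto intro!: derivative_eq_intros dn[OF sab])
      moreover have "exp (- (2 * L * s)) * (- (2 * L)) * (d s \<bullet> d s)
          + exp (- (2 * L * s)) * (2 * (d s \<bullet> v s)) \<le> 0"
      proof -
        have "exp (- (2 * L * s)) * (2 * (d s \<bullet> v s)) \<le> exp (- (2 * L * s)) * (2 * (L * (d s \<bullet> d s)))"
          using key[OF sab] by (intro mult_left_mono) auto
        then show ?thesis by (simp add: algebra_simps)
      qed
      ultimately show "\<exists>y. (\<phi> has_real_derivative y) (at s) \<and> y \<le> 0" by blast
    qed
    then have "exp (- (2 * L * t)) * (d t \<bullet> d t) \<le> 0" using d0 by (simp add: \<phi>_def)
    then show ?thesis by (simp add: mult_le_0_iff)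
  next
    case False
    then have le: "t \<le> tz" by simp
    define \<phi> where "\<phi> s = exp (2 * L * s) * (d s \<bullet> d s)" for s
    have "\<phi> t \<le> \<phi> tz"
    proof (rule DERIV_nonneg_imp_nondecreasing[OF le])
      fix s assume s: "t \<le> s" "s \<le> tz"
      then have sab: "s \<in> {a..b}" using tz t by auto
      have "(\<phi> has_real_derivative exp (2 * L * s) * (2 * L) * (d s \<bullet> d s)
          + exp (2 * L * s) * (2 * (d s \<bullet> v s))) (at s)"
        unfolding \<phi>_def by (auto intro!: derivative_eq_intros dn[OF sab])
      moreover have "0 \<le> exp (2 * L * s) * (2 * L) * (d s \<bullet> d s)
          + exp (2 * L * s) * (2 * (d s \<bullet> v s))"
      proof -
        have "- (d s \<bullet> v s) \<le> norm (d s) * norm (v s)"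
          using norm_cauchy_schwarz[of "- d s" "v s"] by simp
        also have "\<dots> \<le> norm (d s) * (L * norm (d s))"
          using lip[OF sab] by (intro mult_left_mono) (auto simp: d_def v_def)
        also have "\<dots> = L * (d s \<bullet> d s)" by (simp add: power2_norm_eq_inner[symmetric] power2_eq_square)
        finally have "0 \<le> exp (2 * L * s) * (2 * (L * (d s \<bullet> d s) + d s \<bullet> v s))"
          by (intro mult_nonneg_nonneg) auto
        then show ?thesis by (simp add: algebra_simps)
      qed
      ultimately show "\<exists>y. (\<phi> has_real_derivative y) (at s) \<and> 0 \<le> y" by blast
    qed
    then have "exp (2 * L * t) * (d t \<bullet> d t) \<le> 0" using d0 by (simp add: \<phi>_def)
    then show ?thesis by (simp add: mult_le_0_iff)
  qed
  then have "d t = 0" by (metis inner_eq_zero_iff inner_ge_zero order_antisym)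
  then show ?thesis by (simp add: d_def)
qed

theorem global_ode_bounded:
  fixes f :: "'a::euclidean_space \<Rightarrow> 'a"
  assumes lip: "\<And>R. \<exists>L. L-lipschitz_on (cball 0 R) f" and bnd: "\<And>x. norm (f x) \<le> C"
  shows "\<exists>x. x 0 = x0 \<and> (\<forall>t. (x has_vector_derivative f (x t)) (at t))"
proof -
  have C0: "0 \<le> C" using bnd[of 0] norm_ge_zero order_trans by blast
  define B where "B n = cball x0 (C * real n)" for n :: nat
  have Bconv: "convex (B n)" "closed (B n)" "B n \<noteq> {}" for n
    using C0 by (auto simp: B_def not_less)
  have Bsub: "B n \<subseteq> cball 0 (norm x0 + C * real n)" for n
    by (auto simp: B_def dist_norm) (metis add.commute add_le_cancel_left norm_minus_commute norm_triangle_sub order_trans)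
  have Bmono: "n \<le> m \<Longrightarrow> B n \<subseteq> B m" for n m
    using C0 by (auto simp: B_def) (meson mult_left_mono of_nat_le_iff order_trans)
  obtain LL where LL: "\<And>n. (LL n)-lipschitz_on (cball 0 (norm x0 + C * real n)) f"
  proof -
    have "\<forall>n. \<exists>L. L-lipschitz_on (cball 0 (norm x0 + C * real n)) f" using lip by blast
    then show ?thesis using that by metis
  qed
  define fn where "fn n = (\<lambda>z. f (closest_point (B n) z))" for n
  have fnlip: "(LL n)-lipschitz_on UNIV (fn n)" for n
  proof (rule lipschitz_onI)
    show "0 \<le> LL n" using LL lipschitz_on_nonneg by blast
    fix a b :: 'a
    have "dist (fn n a) (fn n b) \<le> LL n * dist (closest_point (B n) a) (closest_point (B n) b)"
      unfolding fn_def
      by (rule lipschitz_onD[OF LL]) (use Bsub closest_point_in_set[OF Bconv(2,3)] in blast)+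
    also have "\<dots> \<le> LL n * dist a b"
      by (intro mult_left_mono closest_point_lipschitz Bconv) (use \<open>0 \<le> LL n\<close> in auto)
    finally show "dist (fn n a) (fn n b) \<le> LL n * dist a b" .
  qed
  have fnb: "norm (fn n z) \<le> C" for n z by (simp add: fn_def bnd)
  obtain xs where xs0: "\<And>n. xs n 0 = x0"
    and dxs: "\<And>n t. (xs n has_vector_derivative fn n (xs n t)) (at t)"
    using global_ode_lipschitz[OF fnlip fnb] by metis
  have xsB: "xs n t \<in> B n" if "\<bar>t\<bar> \<le> real n" for n t
  proof -
    have "norm (xs n t - x0) \<le> (\<lambda>u. C * u) \<bar>t\<bar>"
      by (rule norm_bound_from_zero[where F'="\<lambda>s. fn n (xs n s)" and k="\<lambda>_. C"])
         (auto intro!: derivative_eq_intros dxs simp: xs0 fnb)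
    also have "\<dots> \<le> C * real n" using that C0 by (simp add: mult_left_mono)
    finally show ?thesis by (simp add: B_def dist_norm norm_minus_commute)
  qed
  have fn_eq: "fn n (xs m t) = f (xs m t)" if "\<bar>t\<bar> \<le> real m" "m \<le> n" for n m t
    unfolding fn_def using xsB[OF that(1)] Bmono[OF that(2)] closest_point_self[of "xs m t" "B n"] by auto
  have agree: "xs n t = xs m t" if "\<bar>t\<bar> \<le> real n" "n \<le> m" for n m t
  proof (rule ode_unique[where a="- real n" and b="real n" and tz=0 and x'="\<lambda>s. f (xs n s)"
        and y'="\<lambda>s. f (xs m s)" and L="LL m" and x="xs n" and y="xs m"])
    show "(xs n has_vector_derivative f (xs n s)) (at s)" if "s \<in> {- real n..real n}" for s
      using dxs[of n s] fn_eq[of s n n] that by auto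
    show "(xs m has_vector_derivative f (xs m s)) (at s)" if "s \<in> {- real n..real n}" for s
      using dxs[of m s] fn_eq[of s m m] that \<open>n \<le> m\<close> by auto
    show "norm (f (xs n s) - f (xs m s)) \<le> LL m * norm (xs n s - xs m s)"
      if "s \<in> {- real n..real n}" for s
    proof -
      have "xs n s \<in> B m" "xs m s \<in> B m"
        using xsB[of s n] xsB[of s m] Bmono[OF \<open>n \<le> m\<close>] that \<open>n \<le> m\<close> by auto
      then show ?thesis using lipschitz_on_normD[OF LL[of m]] Bsub by blast
    qed
  qed (use that xs0 in auto)
  define x where "x t = xs (nat \<lceil>\<bar>t\<bar>\<rceil>) t" for t
  have xeq: "x t = xs m t" if "\<bar>t\<bar> \<le> real m" for t m
  proof -
    have "\<bar>t\<bar> \<le> real (nat \<lceil>\<bar>t\<bar>\<rceil>)" by linarith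
    moreover have "nat \<lceil>\<bar>t\<bar>\<rceil> \<le> m" using that by linarith
    ultimately show ?thesis unfolding x_def by (rule agree)
  qed
  show ?thesis
  proof (intro exI conjI allI)
    show "x 0 = x0" using xeq[of 0 0] xs0 by simp
    fix t :: real
    define M where "M = nat \<lceil>\<bar>t\<bar>\<rceil> + 1"
    have tM: "\<bar>t\<bar> \<le> real M" unfolding M_def by linarith
    have "(xs M has_vector_derivative f (x t)) (at t)"
      using dxs[of M t] fn_eq[OF tM order_refl] xeq[OF tM] by simp
    then show "(x has_vector_derivative f (x t)) (at t)"
    proof (rule has_vector_derivative_transform_within_open[of _ _ _ "ball t 1"])
      fix s assume "s \<in> ball t 1"
      then have "\<bar>s\<bar> \<le> real M" unfolding M_def by (auto simp: dist_real_def) linarith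
      then show "xs M s = x s" using xeq by simp
    qed auto
  qed
qed




definition LB :: "'x::metric_space set \<Rightarrow> ('x \<Rightarrow> real) \<Rightarrow> bool" where
  "LB S f \<longleftrightarrow> (\<exists>L. L-lipschitz_on S f) \<and> (\<exists>B. \<forall>x\<in>S. \<bar>f x\<bar> \<le> B)"

lemma LB_const: "LB S (\<lambda>_. c)"
  unfolding LB_def by (auto intro: lipschitz_on_constant)

lemma LB_add: "LB S f \<Longrightarrow> LB S g \<Longrightarrow> LB S (\<lambda>x. f x + g x)"
  unfolding LB_def
proof (elim conjE exE, intro conjI exI ballI)
  fix L1 L2 B1 B2 x
  assume l: "L1-lipschitz_on S f" "L2-lipschitz_on S g" and "\<forall>x\<in>S. \<bar>f x\<bar> \<le> B1" "\<forall>x\<in>S. \<bar>g x\<bar> \<le> B2"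
  show "(L1 + L2)-lipschitz_on S (\<lambda>x. f x + g x)" by (rule lipschitz_on_add[OF l])
  assume "x \<in> S"
  then show "\<bar>f x + g x\<bar> \<le> B1 + B2" using \<open>\<forall>x\<in>S. \<bar>f x\<bar> \<le> B1\<close> \<open>\<forall>x\<in>S. \<bar>g x\<bar> \<le> B2\<close>
  proof -
    have "\<bar>f x\<bar> \<le> B1" "\<bar>g x\<bar> \<le> B2" using \<open>x \<in> S\<close> \<open>\<forall>x\<in>S. \<bar>f x\<bar> \<le> B1\<close> \<open>\<forall>x\<in>S. \<bar>g x\<bar> \<le> B2\<close> by auto
    then show ?thesis using abs_triangle_ineq[of "f x" "g x"] by linarith
  qed
qed

lemma LB_uminus: "LB S f \<Longrightarrow> LB S (\<lambda>x. - f x)"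
  unfolding LB_def by (auto simp: lipschitz_on_minus_iff)

lemma LB_diff: "LB S f \<Longrightarrow> LB S g \<Longrightarrow> LB S (\<lambda>x. f x - g x)"
  using LB_add[of S f "\<lambda>x. - g x"] LB_uminus[of S g] by simp

lemma LB_mult:
  assumes "LB S f" "LB S g"
  shows "LB S (\<lambda>x. f x * g x)"
proof -
  obtain L1 L2 B1 B2 where l1: "L1-lipschitz_on S f" and l2: "L2-lipschitz_on S g"
    and b1: "\<And>x. x\<in>S \<Longrightarrow> \<bar>f x\<bar> \<le> B1" and b2: "\<And>x. x\<in>S \<Longrightarrow> \<bar>g x\<bar> \<le> B2"
    using assms unfolding LB_def by metis
  define C1 where "C1 = max B1 0"
  define C2 where "C2 = max B2 0"
  have c1: "\<And>x. x\<in>S \<Longrightarrow> \<bar>f x\<bar> \<le> C1" "C1 \<ge> 0" using b1 by (force simp: C1_def)+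
  have c2: "\<And>x. x\<in>S \<Longrightarrow> \<bar>g x\<bar> \<le> C2" "C2 \<ge> 0" using b2 by (force simp: C2_def)+
  have L0: "L1 \<ge> 0" "L2 \<ge> 0" using l1 l2 lipschitz_on_nonneg by blast+
  have "(C1 * L2 + C2 * L1)-lipschitz_on S (\<lambda>x. f x * g x)"
  proof (rule lipschitz_onI)
    fix x y assume xy: "x \<in> S" "y \<in> S"
    have "dist (f x * g x) (f y * g y) = \<bar>f x * (g x - g y) + g y * (f x - f y)\<bar>"
      by (simp add: dist_real_def algebra_simps)
    also have "\<dots> \<le> \<bar>f x\<bar> * \<bar>g x - g y\<bar> + \<bar>g y\<bar> * \<bar>f x - f y\<bar>"
      by (metis abs_mult abs_triangle_ineq)
    also have "\<dots> \<le> C1 * (L2 * dist x y) + C2 * (L1 * dist x y)"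
      using lipschitz_onD[OF l1 xy] lipschitz_onD[OF l2 xy] c1 c2 xy
      by (intro add_mono mult_mono) (auto simp: dist_real_def)
    finally show "dist (f x * g x) (f y * g y) \<le> (C1 * L2 + C2 * L1) * dist x y"
      by (simp add: algebra_simps)
  qed (use c1 c2 L0 in auto)
  moreover have "\<forall>x\<in>S. \<bar>f x * g x\<bar> \<le> C1 * C2"
    using c1 c2 by (simp add: abs_mult mult_mono)
  ultimately show ?thesis unfolding LB_def by blast
qed

lemma LB_comp:
  assumes f: "LB S f" and h: "M-lipschitz_on T h" and ST: "\<And>x. x \<in> S \<Longrightarrow> f x \<in> T"
  shows "LB S (\<lambda>x. h (f x))"
proof (cases "S = {}")
  case True then show ?thesis by (auto simp: LB_def lipschitz_on_def intro: exI[of _ 0])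
next
  case False
  then obtain x0 where x0: "x0 \<in> S" by blast
  obtain L B where l: "L-lipschitz_on S f" and b: "\<And>x. x\<in>S \<Longrightarrow> \<bar>f x\<bar> \<le> B"
    using f unfolding LB_def by metis
  have "(M * L)-lipschitz_on S (\<lambda>x. h (f x))"
    using lipschitz_on_compose[OF l lipschitz_on_subset[OF h]] ST by (auto simp: o_def)
  moreover have "\<bar>h (f x)\<bar> \<le> \<bar>h (f x0)\<bar> + M * (2 * B)" if "x \<in> S" for x
  proof -
    have "dist (h (f x)) (h (f x0)) \<le> M * dist (f x) (f x0)"
      using lipschitz_onD[OF h] ST that x0 by blast
    also have "\<dots> \<le> M * (2 * B)"
      using b[OF that] b[OF x0] lipschitz_on_nonneg[OF h]
      by (intro mult_left_mono) (auto simp: dist_real_def)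
    finally show ?thesis by (simp add: dist_real_def)
  qed
  ultimately show ?thesis unfolding LB_def by blast
qed

lemma lip_sin: "1-lipschitz_on UNIV (sin :: real \<Rightarrow> real)"
proof (rule lipschitz_onI)
  fix x y :: real
  have "\<bar>sin x - sin y\<bar> = 2 * \<bar>sin ((x - y) / 2)\<bar> * \<bar>cos ((x + y) / 2)\<bar>"
    by (simp add: sin_diff_sin abs_mult)
  also have "\<dots> \<le> 2 * \<bar>(x - y) / 2\<bar> * 1"
    by (intro mult_mono abs_sin_x_le_abs_x) auto
  finally show "dist (sin x) (sin y) \<le> 1 * dist x y" by (simp add: dist_real_def)
qed simp

lemma lip_cos: "1-lipschitz_on UNIV (cos :: real \<Rightarrow> real)"
proof (rule lipschitz_onI)
  fix x y :: real
  have "\<bar>cos x - cos y\<bar> = 2 * \<bar>sin ((x + y) / 2)\<bar> * \<bar>sin ((y - x) / 2)\<bar>"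
    by (simp add: cos_diff_cos abs_mult)
  also have "\<dots> \<le> 2 * 1 * \<bar>(y - x) / 2\<bar>"
    by (intro mult_mono abs_sin_x_le_abs_x) auto
  finally show "dist (cos x) (cos y) \<le> 1 * dist x y" by (simp add: dist_real_def)
qed simp

lemma lip_inverse: "m > 0 \<Longrightarrow> (1 / m\<^sup>2)-lipschitz_on {m..} (\<lambda>x::real. 1 / x)"
proof (rule lipschitz_onI)
  fix x y :: real assume m: "m > 0" and xy: "x \<in> {m..}" "y \<in> {m..}"
  then have "x > 0" "y > 0" by auto
  have "\<bar>1/x - 1/y\<bar> = \<bar>y - x\<bar> / (x * y)" using \<open>x>0\<close> \<open>y>0\<close>
    by (simp add: field_simps abs_div)
  also have "\<dots> \<le> \<bar>y - x\<bar> / (m * m)"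
    using xy m by (intro divide_left_mono mult_mono) auto
  finally show "dist (1 / x) (1 / y) \<le> 1 / m\<^sup>2 * dist x y"
    by (simp add: dist_real_def power2_eq_square abs_minus_commute)
qed simp

lemma lip_sqrt: "m > 0 \<Longrightarrow> (1 / sqrt m)-lipschitz_on {m..} (\<lambda>x::real. sqrt x)"
proof (rule lipschitz_onI)
  fix x y :: real assume m: "m > 0" and xy: "x \<in> {m..}" "y \<in> {m..}"
  then have sx: "sqrt x \<ge> sqrt m" "sqrt y \<ge> sqrt m" "sqrt m > 0" by auto
  have "(sqrt x - sqrt y) * (sqrt x + sqrt y) = x - y"
    using xy m by (simp add: algebra_simps)
  then have "\<bar>sqrt x - sqrt y\<bar> * (sqrt x + sqrt y) = \<bar>x - y\<bar>"
    using sx by (metis abs_mult abs_of_nonneg add_nonneg_nonneg less_imp_le order.trans)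
  moreover have "\<bar>sqrt x - sqrt y\<bar> * sqrt m \<le> \<bar>sqrt x - sqrt y\<bar> * (sqrt x + sqrt y)"
    using sx by (intro mult_left_mono) (linarith, simp)
  ultimately have "\<bar>sqrt x - sqrt y\<bar> * sqrt m \<le> \<bar>x - y\<bar>" by simp
  then show "dist (sqrt x) (sqrt y) \<le> 1 / sqrt m * dist x y"
    using sx by (simp add: dist_real_def field_simps)
qed simp

lemma lip_clamp: "1-lipschitz_on UNIV (\<lambda>x::real. max a (min b x))"
  by (rule lipschitz_onI) (auto simp: dist_real_def)

lemma lip_maxc: "1-lipschitz_on UNIV (\<lambda>x::real. max a x)"
  by (rule lipschitz_onI) (auto simp: dist_real_def)

lemma LB_fst: "S \<subseteq> cball 0 R \<Longrightarrow> LB S (\<lambda>p::real\<times>real. fst p)"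
  unfolding LB_def
proof (intro conjI exI ballI)
  assume S: "S \<subseteq> cball 0 R"
  show "1-lipschitz_on S (\<lambda>p::real\<times>real. fst p)"
    by (rule lipschitz_onI) (simp_all add: dist_fst_le)
  fix p assume "p \<in> S"
  then have "norm p \<le> R" using S by auto
  moreover have "\<bar>fst p\<bar> \<le> norm p"
    using norm_fst_le[of "fst p" "snd p"] by simp
  ultimately show "\<bar>fst p\<bar> \<le> R" by simp
qed

lemma LB_snd: "S \<subseteq> cball 0 R \<Longrightarrow> LB S (\<lambda>p::real\<times>real. snd p)"
  unfolding LB_def
proof (intro conjI exI ballI)
  assume S: "S \<subseteq> cball 0 R"
  show "1-lipschitz_on S (\<lambda>p::real\<times>real. snd p)"
    by (rule lipschitz_onI) (simp_all add: dist_snd_le)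
  fix p assume "p \<in> S"
  then have "norm p \<le> R" using S by auto
  moreover have "\<bar>snd p\<bar> \<le> norm p"
    using norm_snd_le[of "snd p" "fst p"] by simp
  ultimately show "\<bar>snd p\<bar> \<le> R" by simp
qed




lemma powr_three_halves: "0 \<le> x \<Longrightarrow> x powr (3/2) = x * sqrt (x::real)"
proof -
  assume "0 \<le> x"
  have "x powr (3/2) = x powr (1 + 1/2)" by simp
  also have "\<dots> = x powr 1 * x powr (1/2)" by (rule powr_add)
  also have "\<dots> = x * sqrt x" using \<open>0 \<le> x\<close> by (cases "x = 0") (auto simp: powr_half_sqrt)
  finally show ?thesis .
qed

lemma dG1:
  fixes \<theta> :: real
  assumes sinp: "sin \<theta> > 0" and cosp: "cos \<theta> > 0"
  shows "((\<lambda>x. ln ((1 + sin x) / cos x)) has_real_derivative 1 / cos \<theta>) (at \<theta>)"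
proof -
  have p: "1 + sin \<theta> > 0" using sinp by simp
  have q: "((\<lambda>x. (1 + sin x) / cos x) has_real_derivative
      ((0 + cos \<theta>) * cos \<theta> - (1 + sin \<theta>) * (- sin \<theta>)) / (cos \<theta> * cos \<theta>)) (at \<theta>)"
    by (rule DERIV_divide[OF DERIV_add[OF DERIV_const DERIV_sin] DERIV_cos]) (use cosp in simp)
  have "((\<lambda>x. ln ((1 + sin x) / cos x)) has_real_derivative
      1 / ((1 + sin \<theta>) / cos \<theta>) * (((0 + cos \<theta>) * cos \<theta> - (1 + sin \<theta>) * (- sin \<theta>)) / (cos \<theta> * cos \<theta>))) (at \<theta>)"
    by (rule DERIV_chain2[OF DERIV_ln_divide q]) (use p cosp in simp)
  moreover have "1 / ((1 + sin \<theta>) / cos \<theta>) * (((0 + cos \<theta>) * cos \<theta> - (1 + sin \<theta>) * (- sin \<theta>)) / (cos \<theta> * cos \<theta>)) = 1 / cos \<theta>"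
  proof -
    have "(0 + cos \<theta>) * cos \<theta> - (1 + sin \<theta>) * (- sin \<theta>) = 1 + sin \<theta>"
      using sin_cos_squared_add[of \<theta>] by (simp add: algebra_simps power2_eq_square)
    then have "1 / ((1 + sin \<theta>) / cos \<theta>) * (((0 + cos \<theta>) * cos \<theta> - (1 + sin \<theta>) * (- sin \<theta>)) / (cos \<theta> * cos \<theta>))
       = 1 / ((1 + sin \<theta>) / cos \<theta>) * ((1 + sin \<theta>) / (cos \<theta> * cos \<theta>))" by (simp only:)
    also have "\<dots> = 1 / cos \<theta>" using p cosp by (simp add: divide_simps)
    finally show ?thesis .
  qed
  ultimately show ?thesis by simp
qed
lemma dG2:
  fixes \<theta> :: real
  assumes sinp: "sin \<theta> > 0" and cosp: "cos \<theta> > 0"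
  shows "((\<lambda>x. ln (sin x / (1 + cos x))) has_real_derivative 1 / sin \<theta>) (at \<theta>)"
proof -
  have p: "1 + cos \<theta> > 0" using cosp by simp
  have q: "((\<lambda>x. sin x / (1 + cos x)) has_real_derivative
      (cos \<theta> * (1 + cos \<theta>) - sin \<theta> * (0 + - sin \<theta>)) / ((1 + cos \<theta>) * (1 + cos \<theta>))) (at \<theta>)"
    by (rule DERIV_divide[OF DERIV_sin DERIV_add[OF DERIV_const DERIV_cos]]) (use p in simp)
  have "((\<lambda>x. ln (sin x / (1 + cos x))) has_real_derivative
      1 / (sin \<theta> / (1 + cos \<theta>)) * ((cos \<theta> * (1 + cos \<theta>) - sin \<theta> * (0 + - sin \<theta>)) / ((1 + cos \<theta>) * (1 + cos \<theta>)))) (at \<theta>)"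
    by (rule DERIV_chain2[OF DERIV_ln_divide q]) (use p sinp in simp)
  moreover have "1 / (sin \<theta> / (1 + cos \<theta>)) * ((cos \<theta> * (1 + cos \<theta>) - sin \<theta> * (0 + - sin \<theta>)) / ((1 + cos \<theta>) * (1 + cos \<theta>))) = 1 / sin \<theta>"
  proof -
    have "cos \<theta> * (1 + cos \<theta>) - sin \<theta> * (0 + - sin \<theta>) = 1 + cos \<theta>"
      using sin_cos_squared_add[of \<theta>] by (simp add: algebra_simps power2_eq_square)
    then have "1 / (sin \<theta> / (1 + cos \<theta>)) * ((cos \<theta> * (1 + cos \<theta>) - sin \<theta> * (0 + - sin \<theta>)) / ((1 + cos \<theta>) * (1 + cos \<theta>)))
       = 1 / (sin \<theta> / (1 + cos \<theta>)) * ((1 + cos \<theta>) / ((1 + cos \<theta>) * (1 + cos \<theta>)))" by (simp only:)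
    also have "\<dots> = 1 / sin \<theta>" using p sinp by (simp add: divide_simps)
    finally show ?thesis .
  qed
  ultimately show ?thesis by simp
qed

locale vs =
  fixes \<alpha> d \<beta> :: real
  assumes alpha: "\<alpha> > 0" and dpos: "d > 0" and beta: "\<beta> \<ge> 1"
begin

definition Gf :: "real \<Rightarrow> real" where
  "Gf \<theta> = \<beta> * sqrt \<beta> / d * ln ((1 + sin \<theta>) / cos \<theta>) - 1 / d * ln (sin \<theta> / (1 + cos \<theta>))"

definition Hf :: "real \<Rightarrow> real \<Rightarrow> real" where
  "Hf \<theta> W = Gf \<theta> + \<alpha> * sqrt \<beta> / sqrt (D_beta d \<beta> \<theta> W)"

lemma sb: "sqrt \<beta> > 0" "sqrt \<beta> * sqrt \<beta> = \<beta>" "\<beta> powr (3/2) = \<beta> * sqrt \<beta>" "\<beta> > 0"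
  using beta by (auto simp: powr_three_halves)

lemma Omega_D_pos:
  assumes "(\<theta>, W) \<in> Omega_beta \<beta>"
  shows "D_beta d \<beta> \<theta> W > 0"
proof (rule ccontr)
  assume "\<not> ?thesis"
  have th: "0 < \<theta>" "\<theta> < pi/2" and ne: "(\<theta>, W) \<noteq> (theta_beta \<beta>, 0)"
    using assms by (auto simp: Omega_beta_def)
  have nn: "0 \<le> d\<^sup>2 / \<beta> * (sqrt \<beta> * sin \<theta> - cos \<theta>)\<^sup>2" using sb by auto
  have nn2: "0 \<le> W\<^sup>2" by simp
  from \<open>\<not> ?thesis\<close> nn nn2 have "W\<^sup>2 = 0" "d\<^sup>2 / \<beta> * (sqrt \<beta> * sin \<theta> - cos \<theta>)\<^sup>2 = 0"
    unfolding D_beta_def by linarith+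
  then have W0: "W = 0" and k0: "sqrt \<beta> * sin \<theta> - cos \<theta> = 0"
    using sb dpos by auto
  have sinp: "sin \<theta> > 0" using th by (auto intro: sin_gt_zero)
  have cosp: "cos \<theta> > 0" using th by (auto intro: cos_gt_zero)
  have "tan \<theta> = 1 / sqrt \<beta>" using k0 sinp cosp sb by (simp add: tan_def field_simps)
  then have "\<theta> = theta_beta \<beta>" unfolding theta_beta_def
    using arctan_tan[of \<theta>] th by simp
  with W0 ne show False by simp
qed

lemma Omega_th: "(\<theta>, W) \<in> Omega_beta \<beta> \<Longrightarrow> 0 < \<theta> \<and> \<theta> < pi/2"
  by (auto simp: Omega_beta_def)

lemma Gf_deriv:
  assumes "0 < \<theta>" "\<theta> < pi/2"
  shows "(Gf has_real_derivative (\<beta> powr (3/2) * sin \<theta> - cos \<theta>) / (d * sin \<theta> * cos \<theta>)) (at \<theta>)"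
proof -
  have sinp: "sin \<theta> > 0" using assms by (auto intro: sin_gt_zero)
  have cosp: "cos \<theta> > 0" using assms by (auto intro: cos_gt_zero)
  have s1: "sin \<theta> ^ 2 + cos \<theta> ^ 2 = 1" by simp
  have p1: "1 + sin \<theta> > 0" "1 + cos \<theta> > 0" using sinp cosp by auto
  have "(Gf has_real_derivative \<beta> * sqrt \<beta> / d * (1 / cos \<theta>) - 1 / d * (1 / sin \<theta>)) (at \<theta>)"
    unfolding Gf_def by (intro DERIV_diff DERIV_cmult dG1 dG2 sinp cosp)
  moreover have "\<beta> * sqrt \<beta> / d * (1 / cos \<theta>) - 1 / d * (1 / sin \<theta>)
      = (\<beta> powr (3/2) * sin \<theta> - cos \<theta>) / (d * sin \<theta> * cos \<theta>)"
    using sinp cosp dpos by (simp add: sb divide_simps)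
  ultimately show ?thesis by simp
qed

lemma Hf_deriv_zero:
  assumes dth: "(th has_real_derivative F1 \<alpha> d \<beta> (th t) (Wf t)) (at t)"
    and dW: "(Wf has_real_derivative F2 \<alpha> d \<beta> (th t) (Wf t)) (at t)"
    and om: "(th t, Wf t) \<in> Omega_beta \<beta>"
  shows "((\<lambda>t. Hf (th t) (Wf t)) has_real_derivative 0) (at t)"
proof -
  define \<theta> where "\<theta> = th t"
  define W where "W = Wf t"
  define s where "s = sqrt \<beta>"
  have s: "s > 0" "\<beta> = s * s" "sqrt \<beta> = s" "\<beta> powr (3/2) = s * s * s"
    using sb by (auto simp: s_def)
  define Dv where "Dv = D_beta d \<beta> \<theta> W"
  have Dv: "Dv > 0" using Omega_D_pos om by (simp add: Dv_def \<theta>_def W_def)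
  define q where "q = sqrt Dv"
  have q: "q > 0" "q * q = Dv" using Dv by (auto simp: q_def)
  have th: "0 < \<theta>" "\<theta> < pi/2" using om by (auto simp: Omega_beta_def \<theta>_def)
  have sinp: "sin \<theta> > 0" using th by (auto intro: sin_gt_zero)
  have cosp: "cos \<theta> > 0" using th by (auto intro: cos_gt_zero)
  define k where "k = s * sin \<theta> - cos \<theta>"
  define c where "c = sin \<theta> + s * cos \<theta>"
  define f1 where "f1 = \<alpha> * s * W / (Dv * q)"
  define G' where "G' = (s * s * s * sin \<theta> - cos \<theta>) / (d * sin \<theta> * cos \<theta>)"
  define f2 where "f2 = G' - \<alpha> * d\<^sup>2 * c * k / (s * (Dv * q))"
  have Dth: "D_beta d \<beta> (th t) (Wf t) = Dv" by (simp add: Dv_def \<theta>_def W_def)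
  have F1v: "F1 \<alpha> d \<beta> (th t) (Wf t) = f1"
    unfolding F1_def Dth
    using Dv by (simp add: f1_def q_def powr_three_halves s(3) flip: \<theta>_def W_def)
  have F2v: "F2 \<alpha> d \<beta> (th t) (Wf t) = f2"
    unfolding F2_def Dth
    using Dv by (simp add: f2_def G'_def c_def k_def q_def powr_three_halves s(3,4)
        flip: \<theta>_def W_def)
  have dG: "((\<lambda>t. Gf (th t)) has_real_derivative G' * f1) (at t)"
    using DERIV_chain2[OF Gf_deriv[OF th, unfolded \<theta>_def] dth[unfolded F1v]] by (simp add: G'_def s(4) flip: \<theta>_def)
  define Dd where "Dd = 2 * d\<^sup>2 / \<beta> * k * (s * cos \<theta> + sin \<theta>) * f1 + 2 * W * f2"
  have dD: "((\<lambda>t. D_beta d \<beta> (th t) (Wf t)) has_real_derivative Dd) (at t)"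
    unfolding D_beta_def
    apply (rule derivative_eq_intros dth[unfolded F1v] dW[unfolded F2v] refl)+
    apply (simp add: Dd_def k_def s(3) flip: \<theta>_def W_def)
    apply (simp add: algebra_simps power2_eq_square)
    done
  have dS: "((\<lambda>t. \<alpha> * sqrt \<beta> / sqrt (D_beta d \<beta> (th t) (Wf t))) has_real_derivative
      - (\<alpha> * s * Dd / (2 * Dv * q))) (at t)"
  proof -
    have "((\<lambda>t. sqrt (D_beta d \<beta> (th t) (Wf t))) has_real_derivative inverse (sqrt (D_beta d \<beta> (th t) (Wf t))) / 2 * Dd) (at t)"
      by (rule DERIV_chain2[OF DERIV_real_sqrt dD]) (use Dth Dv in simp)
    then have dq: "((\<lambda>t. sqrt (D_beta d \<beta> (th t) (Wf t))) has_real_derivative Dd / (2 * q)) (at t)"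
      by (simp add: Dth q_def field_simps)
    have "((\<lambda>t. \<alpha> * sqrt \<beta> / sqrt (D_beta d \<beta> (th t) (Wf t))) has_real_derivative
      (0 * q - \<alpha> * sqrt \<beta> * (Dd / (2 * q))) / (q * q)) (at t)"
      using DERIV_divide[OF DERIV_const dq] Dth q by (simp add: q_def)
    moreover have "(0 * q - \<alpha> * sqrt \<beta> * (Dd / (2 * q))) / (q * q) = - (\<alpha> * s * Dd / (2 * Dv * q))"
      using q by (simp add: s(3) field_simps)
    ultimately show ?thesis by simp
  qed
  have "((\<lambda>t. Hf (th t) (Wf t)) has_real_derivative G' * f1 - \<alpha> * s * Dd / (2 * Dv * q)) (at t)"
    unfolding Hf_def using DERIV_add[OF dG dS] by simp
  moreover have "G' * f1 - \<alpha> * s * Dd / (2 * Dv * q) = 0"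
    unfolding Dd_def f2_def f1_def c_def using Dv q s
    by (simp add: field_simps power2_eq_square)
  ultimately show ?thesis by simp
qed

end


context vs begin
lemma Gf_lower:
  assumes th: "0 < \<theta>" "\<theta> < pi/2"
  shows "0 \<le> Gf \<theta>" "- ln \<theta> / d \<le> Gf \<theta>" "- ln (cos \<theta>) / d \<le> Gf \<theta>"
proof -
  have sinp: "sin \<theta> > 0" using th by (auto intro: sin_gt_zero)
  have cosp: "cos \<theta> > 0" using th by (auto intro: cos_gt_zero)
  have sin1: "sin \<theta> \<le> 1" and cos1: "cos \<theta> \<le> 1" by auto
  have sinx: "sin \<theta> \<le> \<theta>" using th by (auto intro: sin_x_le_x)
  define A where "A = ln ((1 + sin \<theta>) / cos \<theta>)"
  define B where "B = ln (sin \<theta> / (1 + cos \<theta>))"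
  have lc: "- ln (cos \<theta>) \<ge> 0" using cosp cos1 by simp
  have A1: "A \<ge> - ln (cos \<theta>)"
  proof -
    have "ln (1 / cos \<theta>) \<le> A" unfolding A_def
      using cosp sinp by (subst ln_le_cancel_iff) (auto simp: divide_right_mono)
    then show ?thesis using cosp by (simp add: ln_div)
  qed
  have B1: "B \<le> ln \<theta>"
  proof -
    have "sin \<theta> / (1 + cos \<theta>) \<le> \<theta>"
    proof -
      have "sin \<theta> / (1 + cos \<theta>) \<le> sin \<theta>"
        using sinp cosp mult_pos_pos[OF sinp cosp] by (simp add: divide_le_eq algebra_simps)
      then show ?thesis using sinx by linarith
    qed
    then show ?thesis unfolding B_def using sinp cosp th by (subst ln_le_cancel_iff) auto
  qed
  have B2: "B \<le> 0"
  proof -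
    have "sin \<theta> \<le> 1 + cos \<theta>" using sin1 cosp by linarith
    then have "sin \<theta> / (1 + cos \<theta>) \<le> 1" using cosp by (simp add: divide_le_eq)
    then show ?thesis unfolding B_def using sinp cosp by simp
  qed
  have bs: "\<beta> * sqrt \<beta> \<ge> 1"
  proof -
    have "1 \<le> sqrt \<beta>" using beta by simp
    then have "1 * 1 \<le> \<beta> * sqrt \<beta>" using beta by (intro mult_mono) auto
    then show ?thesis by simp
  qed
  have G: "Gf \<theta> = (\<beta> * sqrt \<beta> * A - B) / d" unfolding Gf_def A_def B_def by (simp add: diff_divide_distrib)
  have "\<beta> * sqrt \<beta> * A \<ge> 1 * (- ln (cos \<theta>))"
    using bs A1 lc by (intro mult_mono) auto
  then have n1: "0 \<le> \<beta> * sqrt \<beta> * A - B" "- ln \<theta> \<le> \<beta> * sqrt \<beta> * A - B"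
    "- ln (cos \<theta>) \<le> \<beta> * sqrt \<beta> * A - B" using B1 B2 lc by linarith+
  show "0 \<le> Gf \<theta>" unfolding G using n1(1) dpos by simp
  show "- ln \<theta> / d \<le> Gf \<theta>" unfolding G using divide_right_mono[OF n1(2), of d] dpos by simp
  show "- ln (cos \<theta>) / d \<le> Gf \<theta>" unfolding G using divide_right_mono[OF n1(3), of d] dpos by simp
qed

lemma Hf_lower:
  assumes om: "(\<theta>, W) \<in> Omega_beta \<beta>"
  shows "Gf \<theta> \<le> Hf \<theta> W" "\<alpha> * sqrt \<beta> / sqrt (D_beta d \<beta> \<theta> W) \<le> Hf \<theta> W"
proof -
  have D: "D_beta d \<beta> \<theta> W > 0" by (rule Omega_D_pos[OF om])
  have "0 \<le> \<alpha> * sqrt \<beta> / sqrt (D_beta d \<beta> \<theta> W)" using D alpha sb by auto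
  moreover have "0 \<le> Gf \<theta>" using Gf_lower Omega_th[OF om] by auto
  ultimately show "Gf \<theta> \<le> Hf \<theta> W" "\<alpha> * sqrt \<beta> / sqrt (D_beta d \<beta> \<theta> W) \<le> Hf \<theta> W"
    by (auto simp: Hf_def)
qed

lemma region:
  assumes om: "(\<theta>, W) \<in> Omega_beta \<beta>" and H: "Hf \<theta> W \<le> H0"
  shows "exp (- (d * H0)) \<le> \<theta>" "exp (- (d * H0)) \<le> cos \<theta>"
    "(\<alpha> * sqrt \<beta> / H0)\<^sup>2 \<le> D_beta d \<beta> \<theta> W"
proof -
  have th: "0 < \<theta>" "\<theta> < pi/2" using Omega_th[OF om] by auto
  have cosp: "cos \<theta> > 0" using th by (auto intro: cos_gt_zero)
  have D: "D_beta d \<beta> \<theta> W > 0" by (rule Omega_D_pos[OF om])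
  have G: "Gf \<theta> \<le> H0" using Hf_lower[OF om] H by linarith
  have "- ln \<theta> / d \<le> H0" using Gf_lower(2)[OF th] G by linarith
  then have "- (d * H0) \<le> ln \<theta>" using dpos by (simp add: divide_simps mult.commute)
  then show "exp (- (d * H0)) \<le> \<theta>" using th by (metis exp_le_cancel_iff exp_ln)
  have "- ln (cos \<theta>) / d \<le> H0" using Gf_lower(3)[OF th] G by linarith
  then have "- (d * H0) \<le> ln (cos \<theta>)" using dpos by (simp add: divide_simps mult.commute)
  then show "exp (- (d * H0)) \<le> cos \<theta>" using cosp by (metis exp_le_cancel_iff exp_ln)
  have a: "\<alpha> * sqrt \<beta> / sqrt (D_beta d \<beta> \<theta> W) \<le> H0" using Hf_lower(2)[OF om] H by linarith
  have ap: "\<alpha> * sqrt \<beta> > 0" using alpha sb by auto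
  then have H0p: "H0 > 0" using a D ap by (smt (verit) divide_pos_pos real_sqrt_gt_zero)
  have "\<alpha> * sqrt \<beta> / H0 \<le> sqrt (D_beta d \<beta> \<theta> W)"
    using a H0p D by (simp add: divide_simps mult.commute)
  then have "(\<alpha> * sqrt \<beta> / H0)\<^sup>2 \<le> (sqrt (D_beta d \<beta> \<theta> W))\<^sup>2"
    using ap H0p by (intro power_mono) auto
  then show "(\<alpha> * sqrt \<beta> / H0)\<^sup>2 \<le> D_beta d \<beta> \<theta> W" using D by simp
qed

end



lemma LB_sq: "LB S f \<Longrightarrow> LB S (\<lambda>x. (f x)\<^sup>2)"
  using LB_mult[of S f f] by (simp add: power2_eq_square)

lemma abs_k_le: "0 \<le> k \<Longrightarrow> \<bar>t\<bar> \<le> 1 \<Longrightarrow> \<bar>k * t\<bar> \<le> (k::real)"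
  by (simp add: abs_mult mult_left_le)

lemma hvd_fst: "(x has_vector_derivative v) (at t) \<Longrightarrow> ((\<lambda>t. fst (x t)) has_real_derivative fst v) (at t)"
  unfolding has_real_derivative_iff_has_vector_derivative has_vector_derivative_def
  by (drule has_derivative_fst) simp

lemma hvd_snd: "(x has_vector_derivative v) (at t) \<Longrightarrow> ((\<lambda>t. snd (x t)) has_real_derivative snd v) (at t)"
  unfolding has_real_derivative_iff_has_vector_derivative has_vector_derivative_def
  by (drule has_derivative_snd) simp

context vs begin

definition cl :: "real \<Rightarrow> real \<Rightarrow> real \<Rightarrow> real" where "cl a b x = max a (min b x)"

definition Dg :: "real \<Rightarrow> real \<Rightarrow> real \<Rightarrow> real \<times> real \<Rightarrow> real" where
  "Dg a b \<delta> p = max \<delta> (D_beta d \<beta> (cl a b (fst p)) (snd p))"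

definition g1 :: "real \<Rightarrow> real \<Rightarrow> real \<Rightarrow> real \<times> real \<Rightarrow> real" where
  "g1 a b \<delta> p = \<alpha> * sqrt \<beta> * snd p * (1 / (Dg a b \<delta> p * sqrt (Dg a b \<delta> p)))"

definition g2 :: "real \<Rightarrow> real \<Rightarrow> real \<Rightarrow> real \<times> real \<Rightarrow> real" where
  "g2 a b \<delta> p = (\<beta> * sqrt \<beta> * sin (cl a b (fst p)) - cos (cl a b (fst p)))
      * (1 / (d * sin (cl a b (fst p)) * cos (cl a b (fst p))))
    - \<alpha> * d\<^sup>2 / sqrt \<beta> * (sin (cl a b (fst p)) + sqrt \<beta> * cos (cl a b (fst p)))
      * (sqrt \<beta> * sin (cl a b (fst p)) - cos (cl a b (fst p)))
      * (1 / (Dg a b \<delta> p * sqrt (Dg a b \<delta> p)))"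

definition gg :: "real \<Rightarrow> real \<Rightarrow> real \<Rightarrow> real \<times> real \<Rightarrow> real \<times> real" where
  "gg a b \<delta> p = (g1 a b \<delta> p, g2 a b \<delta> p)"

lemma cl_range: "a \<le> b \<Longrightarrow> a \<le> cl a b x \<and> cl a b x \<le> b"
  by (auto simp: cl_def)

lemma sincos_bounds:
  assumes ab: "0 < a" "a \<le> b" "b < pi/2"
  shows "sin a \<le> sin (cl a b x)" "cos b \<le> cos (cl a b x)" "0 < sin a" "0 < cos b"
proof -
  have r: "a \<le> cl a b x" "cl a b x \<le> b" using cl_range[OF ab(2)] by auto
  show "sin a \<le> sin (cl a b x)" using r ab by (intro sin_monotone_2pi_le) auto
  show "cos b \<le> cos (cl a b x)" using r ab by (intro cos_monotone_0_pi_le) auto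
  show "0 < sin a" using ab by (intro sin_gt_zero) auto
  show "0 < cos b" using ab by (intro cos_gt_zero) auto
qed

lemma Dg_ge: "\<delta> \<le> Dg a b \<delta> p" by (simp add: Dg_def)

lemma gg_lip:
  assumes ab: "0 < a" "a \<le> b" "b < pi/2" and dl: "\<delta> > 0"
  shows "\<exists>L. L-lipschitz_on (cball 0 R) (gg a b \<delta>)"
proof -
  let ?S = "cball (0::real\<times>real) R"
  note sc = sincos_bounds[OF ab]
  have c: "LB ?S (\<lambda>p. cl a b (fst p))"
    unfolding cl_def by (rule LB_comp[OF LB_fst lip_clamp]) auto
  have sn: "LB ?S (\<lambda>p. sin (cl a b (fst p)))" by (rule LB_comp[OF c lip_sin]) auto
  have cs: "LB ?S (\<lambda>p. cos (cl a b (fst p)))" by (rule LB_comp[OF c lip_cos]) auto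
  have W: "LB ?S (\<lambda>p. snd p)" by (rule LB_snd) auto
  have D: "LB ?S (\<lambda>p. D_beta d \<beta> (cl a b (fst p)) (snd p))"
    unfolding D_beta_def
    by (intro LB_add LB_mult LB_sq LB_diff LB_const sn cs W)
  have Dg: "LB ?S (Dg a b \<delta>)"
    unfolding Dg_def by (rule LB_comp[OF D lip_maxc]) auto
  have sq: "LB ?S (\<lambda>p. sqrt (Dg a b \<delta> p))"
    by (rule LB_comp[OF Dg lip_sqrt[OF dl]]) (auto simp: Dg_ge)
  have pr: "LB ?S (\<lambda>p. Dg a b \<delta> p * sqrt (Dg a b \<delta> p))" by (rule LB_mult[OF Dg sq])
  have m: "\<delta> * sqrt \<delta> > 0" using dl by simp
  have inv: "LB ?S (\<lambda>p. 1 / (Dg a b \<delta> p * sqrt (Dg a b \<delta> p)))"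
  proof (rule LB_comp[OF pr lip_inverse[OF m]])
    fix p show "Dg a b \<delta> p * sqrt (Dg a b \<delta> p) \<in> {\<delta> * sqrt \<delta>..}"
      using Dg_ge[where p=p and a=a and b=b and \<delta>=\<delta>] dl by (auto intro!: mult_mono)
  qed
  have m2: "d * sin a * cos b > 0" using dpos sc by simp
  have sc2: "LB ?S (\<lambda>p. d * sin (cl a b (fst p)) * cos (cl a b (fst p)))"
    by (intro LB_mult LB_const sn cs)
  have inv2: "LB ?S (\<lambda>p. 1 / (d * sin (cl a b (fst p)) * cos (cl a b (fst p))))"
  proof (rule LB_comp[OF sc2 lip_inverse[OF m2]])
    fix p show "d * sin (cl a b (fst p)) * cos (cl a b (fst p)) \<in> {d * sin a * cos b..}"
      using sc(1)[of "fst p"] sc(2)[of "fst p"] sc(3,4) dpos by (auto intro!: mult_mono)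
  qed
  have l1: "LB ?S (g1 a b \<delta>)"
    unfolding g1_def by (intro LB_mult LB_const W inv)
  have l2: "LB ?S (g2 a b \<delta>)"
    unfolding g2_def by (intro LB_mult LB_diff LB_add LB_const sn cs inv inv2)
  obtain L1 L2 where "L1-lipschitz_on ?S (g1 a b \<delta>)" "L2-lipschitz_on ?S (g2 a b \<delta>)"
    using l1 l2 unfolding LB_def by blast
  then have "(sqrt (L1\<^sup>2 + L2\<^sup>2))-lipschitz_on ?S (\<lambda>p. (g1 a b \<delta> p, g2 a b \<delta> p))"
    by (rule lipschitz_on_Pair)
  then show ?thesis unfolding gg_def by blast
qed

lemma gg_eq:
  assumes "a < \<theta>" "\<theta> < b" "\<delta> < D_beta d \<beta> \<theta> W" "0 < \<delta>" "0 < a" "b < pi/2"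
  shows "gg a b \<delta> (\<theta>, W) = (F1 \<alpha> d \<beta> \<theta> W, F2 \<alpha> d \<beta> \<theta> W)"
proof -
  have sinp: "sin \<theta> > 0" using assms by (intro sin_gt_zero) auto
  have cosp: "cos \<theta> > 0" using assms by (intro cos_gt_zero) auto
  have c: "cl a b \<theta> = \<theta>" using assms by (simp add: cl_def)
  have Dv: "Dg a b \<delta> (\<theta>, W) = D_beta d \<beta> \<theta> W" using assms c by (simp add: Dg_def)
  have Dp: "D_beta d \<beta> \<theta> W > 0" using assms by linarith
  show ?thesis
    apply (simp only: gg_def g1_def g2_def F1_def F2_def fst_conv snd_conv c Dv)
    using Dp sb sinp cosp dpos by (simp add: powr_three_halves field_simps)
qed

lemma gg_bound:
  assumes ab: "0 < a" "a \<le> b" "b < pi/2" and dl: "\<delta> > 0"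
  shows "\<exists>C. \<forall>p. norm (gg a b \<delta> p) \<le> C"
proof -
  note sc = sincos_bounds[OF ab]
  define s where "s = sqrt \<beta>"
  have s: "s > 0" using sb by (auto simp: s_def)
  define m where "m = d * sin a * cos b"
  have m: "m > 0" using dpos sc by (simp add: m_def)
  define C1 where "C1 = \<alpha> * s / \<delta>"
  define C2 where "C2 = (\<beta> * s + 1) * (1 / m) + \<alpha> * d\<^sup>2 / s * (1 + s) * (s + 1) * (1 / (\<delta> * sqrt \<delta>))"
  have "norm (gg a b \<delta> p) \<le> C1 + C2" for p
  proof -
    define c where "c = cl a b (fst p)"
    define W where "W = snd p"
    define Dv where "Dv = Dg a b \<delta> p"
    have Dv: "\<delta> \<le> Dv" by (simp add: Dv_def Dg_ge)
    have Dvp: "Dv > 0" using Dv dl by linarith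
    have WD: "W\<^sup>2 \<le> Dv"
    proof -
      have "W\<^sup>2 \<le> D_beta d \<beta> c W" unfolding D_beta_def using sb by simp
      then show ?thesis by (simp add: Dv_def Dg_def c_def W_def)
    qed
    have absW: "\<bar>W\<bar> \<le> sqrt Dv" using WD real_sqrt_le_mono[OF WD] by simp
    have inv: "1 / (Dv * sqrt Dv) \<le> 1 / (\<delta> * sqrt \<delta>)"
      using Dv dl by (intro divide_left_mono mult_mono) auto
    have invp: "0 < 1 / (Dv * sqrt Dv)" using Dvp by simp
    have b1: "\<bar>g1 a b \<delta> p\<bar> \<le> C1"
    proof -
      have "\<bar>g1 a b \<delta> p\<bar> = \<alpha> * s * \<bar>W\<bar> / (Dv * sqrt Dv)"
        unfolding g1_def using alpha sb Dvp by (simp add: abs_mult W_def Dv_def s_def)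
      also have "\<dots> \<le> \<alpha> * s * sqrt Dv / (Dv * sqrt Dv)"
        using alpha s Dvp absW by (intro divide_right_mono mult_left_mono) auto
      also have "\<dots> = \<alpha> * s / Dv" using Dvp by simp
      also have "\<dots> \<le> \<alpha> * s / \<delta>" using alpha s Dv dl by (intro divide_left_mono) auto
      finally show ?thesis by (simp add: C1_def)
    qed
    have sinc: "sin a \<le> sin c" "cos b \<le> cos c" using sc by (auto simp: c_def)
    have t1: "\<bar>\<beta> * s * sin c - cos c\<bar> \<le> \<beta> * s + 1"
    proof -
      have "\<bar>\<beta> * s * sin c\<bar> \<le> \<beta> * s" using s sb by (intro abs_k_le) auto
      moreover have "\<bar>cos c\<bar> \<le> 1" by simp
      ultimately show ?thesis by linarith
    qed
    have t2: "\<bar>1 / (d * sin c * cos c)\<bar> \<le> 1 / m"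
    proof -
      have "m \<le> d * sin c * cos c" unfolding m_def using dpos sc sinc by (intro mult_mono) auto
      then show ?thesis using m by (simp add: divide_left_mono)
    qed
    have t3: "\<bar>sin c + s * cos c\<bar> \<le> 1 + s"
    proof -
      have "\<bar>s * cos c\<bar> \<le> s" using s by (intro abs_k_le) auto
      moreover have "\<bar>sin c\<bar> \<le> 1" by simp
      ultimately show ?thesis by linarith
    qed
    have t4: "\<bar>s * sin c - cos c\<bar> \<le> s + 1"
    proof -
      have "\<bar>s * sin c\<bar> \<le> s" using s by (intro abs_k_le) auto
      moreover have "\<bar>cos c\<bar> \<le> 1" by simp
      ultimately show ?thesis by linarith
    qed
    have b2: "\<bar>g2 a b \<delta> p\<bar> \<le> C2"
    proof -
      define X where "X = (\<beta> * s * sin c - cos c) * (1 / (d * sin c * cos c))"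
      define Y where "Y = \<alpha> * d\<^sup>2 / s * (sin c + s * cos c) * (s * sin c - cos c) * (1 / (Dv * sqrt Dv))"
      have "g2 a b \<delta> p = X - Y" by (simp add: g2_def X_def Y_def s_def c_def Dv_def)
      then have "\<bar>g2 a b \<delta> p\<bar> \<le> \<bar>X\<bar> + \<bar>Y\<bar>" using abs_triangle_ineq4[of X Y] by simp
      also have "\<bar>X\<bar> + \<bar>Y\<bar> = \<bar>\<beta> * s * sin c - cos c\<bar> * \<bar>1 / (d * sin c * cos c)\<bar>
          + \<alpha> * d\<^sup>2 / s * \<bar>sin c + s * cos c\<bar> * \<bar>s * sin c - cos c\<bar> * \<bar>1 / (Dv * sqrt Dv)\<bar>"
        unfolding X_def Y_def using alpha s dpos by (simp only: abs_mult) simp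
      also have "\<dots> \<le> (\<beta> * s + 1) * (1 / m) + \<alpha> * d\<^sup>2 / s * (1 + s) * (s + 1) * (1 / (\<delta> * sqrt \<delta>))"
        using t1 t2 t3 t4 inv invp alpha s dpos
        by (intro add_mono mult_mono) auto
      finally show ?thesis by (simp add: C2_def)
    qed
    have "norm (gg a b \<delta> p) \<le> \<bar>g1 a b \<delta> p\<bar> + \<bar>g2 a b \<delta> p\<bar>"
      unfolding gg_def norm_Pair using sqrt_sum_squares_le_sum_abs by simp
    then show ?thesis using b1 b2 by linarith
  qed
  then show ?thesis by blast
qed

end



context vs begin

lemma D_theta_beta: "D_beta d \<beta> (theta_beta \<beta>) 0 = 0"
proof -
  define s where "s = sqrt \<beta>"
  have s: "s > 0" using sb by (simp add: s_def)
  define r where "r = sqrt (1 + (1 / s)\<^sup>2)"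
  have r: "r > 0" by (simp add: r_def add_pos_nonneg)
  have "s * sin (theta_beta \<beta>) - cos (theta_beta \<beta>) = s * ((1/s) / r) - 1 / r"
    by (simp add: theta_beta_def sin_arctan cos_arctan s_def r_def)
  also have "\<dots> = 0" using s r by (simp add: field_simps)
  finally show ?thesis by (simp add: D_beta_def s_def)
qed

lemma Hf_cont:
  assumes "\<And>p. p \<in> K \<Longrightarrow> 0 < fst p \<and> 0 < sin (fst p) \<and> 0 < cos (fst p) \<and> 0 < D_beta d \<beta> (fst p) (snd p)"
  shows "continuous_on K (\<lambda>p. Hf (fst p) (snd p))"
  unfolding Hf_def Gf_def D_beta_def
  apply (intro continuous_intros)
  apply (auto dest!: assms[unfolded D_beta_def])
  done

theorem main:
  assumes om0: "(\<theta>0, W0) \<in> Omega_beta \<beta>"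
  shows "\<exists>!(\<theta>, W). \<theta> \<in> C1_functions \<and> W \<in> C1_functions \<and>
      \<theta> 0 = \<theta>0 \<and> W 0 = W0 \<and>
      (\<forall>t. (\<theta> t, W t) \<in> Omega_beta \<beta>) \<and>
      (\<forall>t. (\<theta> has_real_derivative F1 \<alpha> d \<beta> (\<theta> t) (W t)) (at t)) \<and>
      (\<forall>t. (W has_real_derivative F2 \<alpha> d \<beta> (\<theta> t) (W t)) (at t))"
proof -
  define H0 where "H0 = Hf \<theta>0 W0"
  have D0: "D_beta d \<beta> \<theta>0 W0 > 0" by (rule Omega_D_pos[OF om0])
  have H0p: "H0 > 0"
  proof -
    have "0 < \<alpha> * sqrt \<beta> / sqrt (D_beta d \<beta> \<theta>0 W0)" using alpha sb D0 by simp
    then show ?thesis using Hf_lower(2)[OF om0] by (simp add: H0_def)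
  qed
  define e where "e = exp (- (d * H0))"
  have e: "0 < e" "e < 1" using dpos H0p by (auto simp: e_def)
  define \<delta>1 where "\<delta>1 = (\<alpha> * sqrt \<beta> / H0)\<^sup>2"
  have d1: "\<delta>1 > 0" using alpha sb H0p by (simp add: \<delta>1_def)
  define a where "a = e / 2"
  define b where "b = arccos (e / 2)"
  define \<delta> where "\<delta> = \<delta>1 / 2"
  have dl: "\<delta> > 0" using d1 by (simp add: \<delta>_def)
  have bprops: "0 \<le> b" "b \<le> pi" "cos b = e / 2"
    using arccos[of "e/2"] e by (auto simp: b_def)
  have bpi: "b < pi / 2"
  proof (rule ccontr)
    assume "\<not> b < pi / 2"
    then have "cos b \<le> cos (pi / 2)" using bprops by (intro cos_monotone_0_pi_le) auto
    then show False using bprops e by simp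
  qed
  have inU: "a < \<theta> \<and> \<theta> < b \<and> \<delta> < D_beta d \<beta> \<theta> W"
    if om: "(\<theta>, W) \<in> Omega_beta \<beta>" and H: "Hf \<theta> W \<le> H0" for \<theta> W
  proof (intro conjI)
    note r = region[OF om H]
    have th: "0 < \<theta>" "\<theta> < pi/2" using Omega_th[OF om] by auto
    have "e \<le> \<theta>" using r(1) by (simp add: e_def)
    then show "a < \<theta>" using e by (simp add: a_def)
    show "\<theta> < b"
    proof (rule ccontr)
      assume "\<not> \<theta> < b"
      then have "cos \<theta> \<le> cos b" using bprops th by (intro cos_monotone_0_pi_le) auto
      moreover have "e \<le> cos \<theta>" using r(2) by (simp add: e_def)
      ultimately show False using bprops e by linarith
    qed
    have "\<delta>1 \<le> D_beta d \<beta> \<theta> W" using r(3) by (simp add: \<delta>1_def)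
    then show "\<delta> < D_beta d \<beta> \<theta> W" using d1 by (simp add: \<delta>_def)
  qed
  have ab: "0 < a" "a \<le> b" "b < pi / 2"
    using e bpi inU[OF om0] by (auto simp: a_def H0_def)
  have Usub: "(\<theta>, W) \<in> Omega_beta \<beta>" if "a < \<theta>" "\<theta> < b" "\<delta> < D_beta d \<beta> \<theta> W" for \<theta> W
  proof -
    have "(\<theta>, W) \<noteq> (theta_beta \<beta>, 0)" using that D_theta_beta dl by auto
    then show ?thesis using that ab by (auto simp: Omega_beta_def)
  qed
  have geq: "gg a b \<delta> (\<theta>, W) = (F1 \<alpha> d \<beta> \<theta> W, F2 \<alpha> d \<beta> \<theta> W)"
    if "a < \<theta>" "\<theta> < b" "\<delta> < D_beta d \<beta> \<theta> W" for \<theta> W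
    using gg_eq[OF that dl ab(1) ab(3)] .
  obtain C where C: "\<And>p. norm (gg a b \<delta> p) \<le> C" using gg_bound[OF ab dl] by blast
  have lipR: "\<And>R. \<exists>L. L-lipschitz_on (cball 0 R) (gg a b \<delta>)" using gg_lip[OF ab dl] by blast
  obtain x where x0: "x 0 = (\<theta>0, W0)" and dx: "\<And>t. (x has_vector_derivative gg a b \<delta> (x t)) (at t)"
    using global_ode_bounded[OF lipR C, of "(\<theta>0, W0)"] by blast
  have xcont: "continuous_on UNIV x"
    using has_vector_derivative_continuous[OF dx] by (simp add: continuous_at_imp_continuous_on)
  have gcont: "continuous_on UNIV (gg a b \<delta>)"
  proof -
    have "isCont (gg a b \<delta>) p" for p
    proof -
      obtain L where "L-lipschitz_on (cball 0 (norm p + 1)) (gg a b \<delta>)" using lipR by blast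
      then have "continuous_on (cball 0 (norm p + 1)) (gg a b \<delta>)" by (rule lipschitz_on_continuous_on)
      moreover have "p \<in> interior (cball 0 (norm p + 1))" by simp
      ultimately show ?thesis by (rule continuous_on_interior)
    qed
    then show ?thesis by (simp add: continuous_at_imp_continuous_on)
  qed
  define Lset where "Lset = {p. p \<in> Omega_beta \<beta> \<and> Hf (fst p) (snd p) = H0}"
  define T where "T = x -` Lset"
  have Dcont: "continuous_on UNIV (\<lambda>p. D_beta d \<beta> (fst p) (snd p))"
    unfolding D_beta_def by (intro continuous_intros)
  have openT: "open T"
    unfolding open_contains_ball
  proof
    fix t assume "t \<in> T"
    then have xt: "x t \<in> Omega_beta \<beta>" "Hf (fst (x t)) (snd (x t)) = H0" by (auto simp: T_def Lset_def)
    define U where "U = {p. a < fst p} \<inter> {p. fst p < b} \<inter> {p. \<delta> < D_beta d \<beta> (fst p) (snd p)}"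
    have "open U" unfolding U_def
      by (intro open_Int open_Collect_less continuous_intros Dcont)
    then have "open (x -` U)" using xcont by (rule open_vimage)
    moreover have "t \<in> x -` U" using inU[of "fst (x t)" "snd (x t)"] xt by (simp add: U_def)
    ultimately obtain \<epsilon> where \<epsilon>: "\<epsilon> > 0" "ball t \<epsilon> \<subseteq> x -` U"
      unfolding open_contains_ball by blast
    have inUs: "a < fst (x s) \<and> fst (x s) < b \<and> \<delta> < D_beta d \<beta> (fst (x s)) (snd (x s))"
      if "s \<in> ball t \<epsilon>" for s using \<epsilon> that by (auto simp: U_def)
    have omS: "x s \<in> Omega_beta \<beta>" if "s \<in> ball t \<epsilon>" for s
      using Usub[of "fst (x s)" "snd (x s)"] inUs[OF that] by simp
    have dH: "((\<lambda>s. Hf (fst (x s)) (snd (x s))) has_real_derivative 0) (at s)" if "s \<in> ball t \<epsilon>" for s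
    proof (rule Hf_deriv_zero)
      have g: "gg a b \<delta> (x s) = (F1 \<alpha> d \<beta> (fst (x s)) (snd (x s)), F2 \<alpha> d \<beta> (fst (x s)) (snd (x s)))"
        using geq[of "fst (x s)" "snd (x s)"] inUs[OF that] by simp
      show "((\<lambda>s. fst (x s)) has_real_derivative F1 \<alpha> d \<beta> (fst (x s)) (snd (x s))) (at s)"
        using hvd_fst[OF dx[of s]] g by simp
      show "((\<lambda>s. snd (x s)) has_real_derivative F2 \<alpha> d \<beta> (fst (x s)) (snd (x s))) (at s)"
        using hvd_snd[OF dx[of s]] g by simp
      show "(fst (x s), snd (x s)) \<in> Omega_beta \<beta>" using omS[OF that] by simp
    qed
    obtain c where c: "\<forall>s\<in>ball t \<epsilon>. Hf (fst (x s)) (snd (x s)) = c"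
      using has_field_derivative_zero_constant[of "ball t \<epsilon>" "\<lambda>s. Hf (fst (x s)) (snd (x s))"]
        dH by (auto intro: has_field_derivative_at_within)
    have "c = H0" using c xt \<epsilon> by auto
    then have "ball t \<epsilon> \<subseteq> T" using c omS by (auto simp: T_def Lset_def)
    then show "\<exists>\<epsilon>>0. ball t \<epsilon> \<subseteq> T" using \<epsilon> by blast
  qed
  have closedT: "closed T"
  proof -
    define Kc where "Kc = {p. e \<le> fst p} \<inter> {p. fst p \<le> pi/2} \<inter> {p. e \<le> cos (fst p)}
        \<inter> {p. \<delta>1 \<le> D_beta d \<beta> (fst p) (snd p)}"
    have Kc_om: "p \<in> Omega_beta \<beta>" if "p \<in> Kc" for p
    proof -
      obtain \<theta> W where p: "p = (\<theta>, W)" by (cases p)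
      have h: "e \<le> \<theta>" "\<theta> \<le> pi/2" "e \<le> cos \<theta>" "\<delta>1 \<le> D_beta d \<beta> \<theta> W"
        using that by (auto simp: Kc_def p)
      have "\<theta> \<noteq> pi/2"
      proof
        assume "\<theta> = pi/2"
        then have "cos \<theta> = 0" by (simp only: cos_pi_half)
        then show False using h e by simp
      qed
      moreover have "(\<theta>, W) \<noteq> (theta_beta \<beta>, 0)" using h d1 D_theta_beta by auto
      ultimately show ?thesis using h e by (auto simp: Omega_beta_def p)
    qed
    have "closed Kc" unfolding Kc_def
      by (intro closed_Int closed_Collect_le continuous_intros Dcont)
    moreover have "continuous_on Kc (\<lambda>p. Hf (fst p) (snd p))"
    proof (rule Hf_cont)
      fix p assume "p \<in> Kc"
      then have om: "p \<in> Omega_beta \<beta>" by (rule Kc_om)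
      obtain \<theta> W where p: "p = (\<theta>, W)" by (cases p)
      have th: "0 < \<theta>" "\<theta> < pi/2" using om Omega_th p by auto
      show "0 < fst p \<and> 0 < sin (fst p) \<and> 0 < cos (fst p) \<and> 0 < D_beta d \<beta> (fst p) (snd p)"
        using th Omega_D_pos om p by (auto intro: sin_gt_zero cos_gt_zero)
    qed
    ultimately have "closed {p \<in> Kc. Hf (fst p) (snd p) = H0}"
      by (rule continuous_closed_preimage_constant[rotated])
    moreover have "{p \<in> Kc. Hf (fst p) (snd p) = H0} = Lset"
    proof (intro set_eqI iffI)
      fix p assume "p \<in> {p \<in> Kc. Hf (fst p) (snd p) = H0}"
      then show "p \<in> Lset" using Kc_om by (auto simp: Lset_def)
    next
      fix p assume p: "p \<in> Lset"
      obtain \<theta> W where pp: "p = (\<theta>, W)" by (cases p)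
      have om: "(\<theta>, W) \<in> Omega_beta \<beta>" and H: "Hf \<theta> W \<le> H0" using p by (auto simp: Lset_def pp)
      note r = region[OF om H]
      show "p \<in> {p \<in> Kc. Hf (fst p) (snd p) = H0}"
        using r Omega_th[OF om] p by (auto simp: Kc_def pp e_def \<delta>1_def Lset_def)
    qed
    ultimately have "closed Lset" by simp
    then show ?thesis unfolding T_def using xcont by (rule closed_vimage)
  qed
  have "0 \<in> T" using x0 om0 by (simp add: T_def Lset_def H0_def)
  then have TU: "T = UNIV" using clopen[of T] openT closedT by auto
  define \<theta>s where "\<theta>s t = fst (x t)" for t
  define Ws where "Ws t = snd (x t)" for t
  have xs: "x t = (\<theta>s t, Ws t)" for t by (simp add: \<theta>s_def Ws_def)
  have inL: "(\<theta>s t, Ws t) \<in> Omega_beta \<beta>" "Hf (\<theta>s t) (Ws t) = H0" for t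
  proof -
    have "t \<in> T" using TU by simp
    then have "x t \<in> Omega_beta \<beta> \<and> Hf (fst (x t)) (snd (x t)) = H0" by (simp add: T_def Lset_def)
    then show "(\<theta>s t, Ws t) \<in> Omega_beta \<beta>" "Hf (\<theta>s t) (Ws t) = H0"
      by (simp_all add: \<theta>s_def Ws_def)
  qed
  have gx: "gg a b \<delta> (x t) = (F1 \<alpha> d \<beta> (\<theta>s t) (Ws t), F2 \<alpha> d \<beta> (\<theta>s t) (Ws t))" for t
    using inU[OF inL(1)[of t]] inL(2)[of t] geq xs[of t] by auto
  have dth: "(\<theta>s has_real_derivative F1 \<alpha> d \<beta> (\<theta>s t) (Ws t)) (at t)" for t
    using hvd_fst[OF dx[of t]] gx[of t] unfolding \<theta>s_def[abs_def] by simp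
  have dW: "(Ws has_real_derivative F2 \<alpha> d \<beta> (\<theta>s t) (Ws t)) (at t)" for t
    using hvd_snd[OF dx[of t]] gx[of t] unfolding Ws_def[abs_def] by simp
  have gxcont: "continuous_on UNIV (\<lambda>t. gg a b \<delta> (x t))"
    using continuous_on_compose2[OF gcont xcont] by auto
  have C1th: "\<theta>s \<in> C1_functions"
  proof -
    have "deriv \<theta>s = (\<lambda>t. fst (gg a b \<delta> (x t)))"
      using dth gx by (auto simp: fun_eq_iff intro!: DERIV_imp_deriv)
    moreover have "continuous_on UNIV (\<lambda>t. fst (gg a b \<delta> (x t)))"
      by (intro continuous_intros gxcont)
    moreover have "\<theta>s differentiable (at t)" for t
      using dth[of t] unfolding has_field_derivative_def by (rule differentiableI)
    ultimately show ?thesis by (simp add: C1_functions_def)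
  qed
  have C1W: "Ws \<in> C1_functions"
  proof -
    have "deriv Ws = (\<lambda>t. snd (gg a b \<delta> (x t)))"
      using dW gx by (auto simp: fun_eq_iff intro!: DERIV_imp_deriv)
    moreover have "continuous_on UNIV (\<lambda>t. snd (gg a b \<delta> (x t)))"
      by (intro continuous_intros gxcont)
    moreover have "Ws differentiable (at t)" for t
      using dW[of t] unfolding has_field_derivative_def by (rule differentiableI)
    ultimately show ?thesis by (simp add: C1_functions_def)
  qed
  have uniq: "\<theta>' = \<theta>s \<and> W' = Ws"
    if P: "(\<forall>t. (\<theta>' t, W' t) \<in> Omega_beta \<beta>)" "\<theta>' 0 = \<theta>0" "W' 0 = W0"
      "\<forall>t. (\<theta>' has_real_derivative F1 \<alpha> d \<beta> (\<theta>' t) (W' t)) (at t)"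
      "\<forall>t. (W' has_real_derivative F2 \<alpha> d \<beta> (\<theta>' t) (W' t)) (at t)" for \<theta>' W'
  proof -
    define y where "y t = (\<theta>' t, W' t)" for t
    have Hc: "Hf (\<theta>' t) (W' t) = H0" for t
    proof -
      have "\<forall>t. ((\<lambda>t. Hf (\<theta>' t) (W' t)) has_real_derivative 0) (at t)"
        using P Hf_deriv_zero by blast
      then have "Hf (\<theta>' t) (W' t) = Hf (\<theta>' 0) (W' 0)" by (rule DERIV_isconst_all)
      then show ?thesis using P by (simp add: H0_def)
    qed
    have gy: "gg a b \<delta> (y t) = (F1 \<alpha> d \<beta> (\<theta>' t) (W' t), F2 \<alpha> d \<beta> (\<theta>' t) (W' t))" for t
      using inU[OF P(1)[rule_format, of t]] Hc[of t] geq by (auto simp: y_def)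
    have dy: "(y has_vector_derivative gg a b \<delta> (y t)) (at t)" for t
    proof -
      have "((\<lambda>t. (\<theta>' t, W' t)) has_vector_derivative
          (F1 \<alpha> d \<beta> (\<theta>' t) (W' t), F2 \<alpha> d \<beta> (\<theta>' t) (W' t))) (at t)"
        by (intro has_vector_derivative_Pair)
           (use P in \<open>auto simp: has_real_derivative_iff_has_vector_derivative[symmetric]\<close>)
      then show ?thesis using gy[of t] by (simp add: y_def[abs_def])
    qed
    have ycont: "continuous_on UNIV y"
      using has_vector_derivative_continuous[OF dy] by (simp add: continuous_at_imp_continuous_on)
    have "x t = y t" for t
    proof -
      define T0 where "T0 = \<bar>t\<bar>"
      have "compact (x ` {-T0..T0} \<union> y ` {-T0..T0})"
        by (intro compact_Un compact_continuous_image continuous_on_subset[OF xcont]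
            continuous_on_subset[OF ycont]) auto
      then obtain R where R: "\<forall>p \<in> x ` {-T0..T0} \<union> y ` {-T0..T0}. norm p \<le> R"
        using compact_imp_bounded bounded_pos by metis
      obtain L where L: "L-lipschitz_on (cball 0 R) (gg a b \<delta>)" using lipR by blast
      show ?thesis
      proof (rule ode_unique[where a="-T0" and b=T0 and tz=0 and x=x and y=y
            and x'="\<lambda>s. gg a b \<delta> (x s)" and y'="\<lambda>s. gg a b \<delta> (y s)" and L=L])
        fix s assume s: "s \<in> {-T0..T0}"
        then have "x s \<in> cball 0 R" "y s \<in> cball 0 R" using R by auto
        then show "norm (gg a b \<delta> (x s) - gg a b \<delta> (y s)) \<le> L * norm (x s - y s)"
          using lipschitz_on_normD[OF L] by blast
      qed (use dx dy x0 P in \<open>auto simp: y_def T0_def\<close>)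
    qed
    then show ?thesis using xs by (auto simp: fun_eq_iff y_def)
  qed
  show ?thesis
  proof (rule ex1I[where a="(\<theta>s, Ws)"])
    show "case (\<theta>s, Ws) of (\<theta>, W) \<Rightarrow> \<theta> \<in> C1_functions \<and> W \<in> C1_functions \<and>
      \<theta> 0 = \<theta>0 \<and> W 0 = W0 \<and>
      (\<forall>t. (\<theta> t, W t) \<in> Omega_beta \<beta>) \<and>
      (\<forall>t. (\<theta> has_real_derivative F1 \<alpha> d \<beta> (\<theta> t) (W t)) (at t)) \<and>
      (\<forall>t. (W has_real_derivative F2 \<alpha> d \<beta> (\<theta> t) (W t)) (at t))"
      using C1th C1W inL dth dW x0 xs[of 0] by auto
  next
    fix z assume "case z of (\<theta>, W) \<Rightarrow> \<theta> \<in> C1_functions \<and> W \<in> C1_functions \<and>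
      \<theta> 0 = \<theta>0 \<and> W 0 = W0 \<and>
      (\<forall>t. (\<theta> t, W t) \<in> Omega_beta \<beta>) \<and>
      (\<forall>t. (\<theta> has_real_derivative F1 \<alpha> d \<beta> (\<theta> t) (W t)) (at t)) \<and>
      (\<forall>t. (W has_real_derivative F2 \<alpha> d \<beta> (\<theta> t) (W t)) (at t))"
    then show "z = (\<theta>s, Ws)" using uniq by (cases z) auto
  qed
qed

end

theorem theorem1:
  fixes \<alpha> d \<beta> \<theta>0 W0 :: real
  assumes "\<alpha> > 0" and "d > 0" and "\<beta> \<ge> 1"
    and "(\<theta>0, W0) \<in> Omega_beta \<beta>"
  shows "\<exists>!(\<theta>, W). \<theta> \<in> C1_functions \<and> W \<in> C1_functions \<and>
      \<theta> 0 = \<theta>0 \<and> W 0 = W0 \<and>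
      (\<forall>t. (\<theta> t, W t) \<in> Omega_beta \<beta>) \<and>
      (\<forall>t. (\<theta> has_real_derivative F1 \<alpha> d \<beta> (\<theta> t) (W t)) (at t)) \<and>
      (\<forall>t. (W has_real_derivative F2 \<alpha> d \<beta> (\<theta> t) (W t)) (at t))"
proof -
  interpret vs \<alpha> d \<beta> using assms by unfold_locales auto
  show ?thesis by (rule main[OF assms(4)])
qed


end
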